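(* Let $a$ and $b$ be relatively prime integers with $1<a<b$ and $S=\langle a,b\rangle$. Let $i\in\{1,\dots,a-1\}$ with $I_{i,a}(S)\neq\varnothing$ and let $h_i=\min I_{i,a}(S)$. If $n$ is the smallest positive integer such that $h_i+na\in b\mathbb{N}$, then $I_{i,a}(S)=\{h_i,h_i+a,\dots,h_i+(n-1)a\}$.
   Context: $\mathbb{N}$ is the set of nonnegative integers, $b\mathbb{N}=\{bk:k\in\mathbb{N}\}$, and $\langle a,b\rangle=\{\lambda_1a+\lambda_2b:\lambda_1,\lambda_2\in\mathbb{N}\}$. $I(S)$ is the set of isolated gaps of $S$ ($x\in\mathbb{N}\setminus S$ with $x-1,x+1\in S$), and $I_{i,a}(S)=\{s\in I(S):s\equiv i\pmod a\}$. *)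

theory Defs
  imports Main
begin

definition gen2 :: "nat \<Rightarrow> nat \<Rightarrow> nat set" where
  "gen2 a b = {l1 * a + l2 * b | l1 l2. True}"

definition isolated_gaps :: "nat set \<Rightarrow> nat set" where
  "isolated_gaps S = {x. x \<notin> S \<and> x \<ge> 1 \<and> x - 1 \<in> S \<and> x + 1 \<in> S}"

definition isolated_gaps_mod :: "nat \<Rightarrow> nat \<Rightarrow> nat set \<Rightarrow> nat set" where
  "isolated_gaps_mod i a S = {s \<in> isolated_gaps S. s mod a = i mod a}"

end

theory Submission
  imports Defs
begin

lemma gen2_add_a: "x \<in> gen2 a b \<Longrightarrow> x + k * a \<in> gen2 a b"
  unfolding gen2_def
  by clarsimp (metis add.commute add.left_commute distrib_right)

lemma gen2_dvd_b: "b dvd N \<Longrightarrow> N \<in> gen2 a b"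
proof -
  assume "b dvd N"
  then obtain k where "N = b * k" by (rule dvdE)
  then have "N = k * b" by simp
  then have "N = 0 * a + k * b" by simp
  then show ?thesis unfolding gen2_def by blast
qed

lemma gen2_mult_a: "(k::nat) * a \<in> gen2 a b"
  using gen2_add_a[OF gen2_dvd_b[of b 0 a]] by simp

theorem lemma4p6:
  fixes a b i n :: nat
  assumes "coprime a b" and "1 < a" and "a < b"
    and "1 \<le> i" and "i \<le> a - 1"
    and "isolated_gaps_mod i a (gen2 a b) \<noteq> {}"
    and "0 < n" and "b dvd (LEAST x. x \<in> isolated_gaps_mod i a (gen2 a b)) + n * a"
    and "\<And>m. 0 < m \<Longrightarrow> m < n \<Longrightarrow>
           \<not> b dvd (LEAST x. x \<in> isolated_gaps_mod i a (gen2 a b)) + m * a"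
  shows "isolated_gaps_mod i a (gen2 a b) =
           {(LEAST x. x \<in> isolated_gaps_mod i a (gen2 a b)) + k * a | k. k < n}"
proof -
  define S where "S = gen2 a b"
  define I where "I = isolated_gaps_mod i a S"
  define h where "h = (LEAST x. x \<in> I)"
  have hI: "h \<in> I" unfolding h_def using assms(6) unfolding I_def S_def
    by (metis LeastI_ex equals0I)
  have hmin: "\<And>x. x \<in> I \<Longrightarrow> h \<le> x" unfolding h_def by (rule Least_le)
  have hS: "h \<notin> S" "h \<ge> 1" "h - 1 \<in> S" "h + 1 \<in> S" "h mod a = i mod a"
    using hI unfolding I_def isolated_gaps_mod_def isolated_gaps_def by auto
  have dvdn: "b dvd h + n * a" and ndvd: "\<And>m. 0 < m \<Longrightarrow> m < n \<Longrightarrow> \<not> b dvd h + m * a"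
    using assms(8,9) unfolding h_def I_def S_def by auto
  have notS: "h + k * a \<notin> S" if "k < n" for k
  proof
    assume "h + k * a \<in> S"
    then obtain l1 l2 where e: "h + k * a = l1 * a + l2 * b" unfolding S_def gen2_def by auto
    have m: "(l2 * b) mod a = h mod a"
    proof -
      have "(h + k * a) mod a = (l1 * a + l2 * b) mod a" using e by simp
      then show ?thesis by simp
    qed
    show False
    proof (cases "l2 * b \<le> h")
      case True
      then have "a dvd h - l2 * b" using m mod_eq_dvd_iff_nat[OF True] by metis
      then obtain q where "h - l2 * b = q * a" by (metis dvdE mult.commute)
      then have "h = l2 * b + q * a" using True by simp
      then have "h = q * a + l2 * b" by simp
      then have "h \<in> S" unfolding S_def gen2_def by blast
      then show False using hS by simp
    next
      case False
      then have "a dvd l2 * b - h" using m by (simp add: mod_eq_dvd_iff_nat)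
      then obtain q where q: "l2 * b - h = q * a" by (metis dvdE mult.commute)
      have "l2 * b \<le> h + k * a" using e by simp
      then have "q * a \<le> k * a" using q False by linarith
      then have "q \<le> k" using assms(2) by simp
      have "q > 0" using q False by (cases q) auto
      have "h + q * a = l2 * b" using q False by linarith
      then have "b dvd h + q * a" by simp
      then show False using ndvd[OF \<open>q > 0\<close>] \<open>q \<le> k\<close> that by simp
    qed
  qed
  have "I = {h + k * a | k. k < n}"
  proof
    show "{h + k * a | k. k < n} \<subseteq> I"
    proof clarify
      fix k assume k: "k < n"
      have 1: "h + k * a - 1 \<in> S" using gen2_add_a[of "h - 1" a b k] hS unfolding S_def by simp
      have 2: "h + k * a + 1 \<in> S" using gen2_add_a[of "h + 1" a b k] hS unfolding S_def
        by (simp add: add.commute add.left_commute)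
      show "h + k * a \<in> I" using notS[OF k] 1 2 hS unfolding I_def isolated_gaps_mod_def isolated_gaps_def
        by auto
    qed
  next
    show "I \<subseteq> {h + k * a | k. k < n}"
    proof
      fix x assume x: "x \<in> I"
      have "h \<le> x" using hmin x .
      have "x mod a = i mod a" "x \<notin> S" using x unfolding I_def isolated_gaps_mod_def isolated_gaps_def by auto
      then have "a dvd x - h" using mod_eq_dvd_iff_nat[OF \<open>h \<le> x\<close>] hS(5) by metis
      then obtain k where k: "x - h = k * a" by (metis dvdE mult.commute)
      have "k < n"
      proof (rule ccontr)
        assume "\<not> k < n"
        then have "x = (h + n * a) + (k - n) * a" using k \<open>h \<le> x\<close>
          by (simp add: diff_mult_distrib)
        moreover have "h + n * a \<in> S" using gen2_dvd_b[OF dvdn] unfolding S_def .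
        ultimately have "x \<in> S" using gen2_add_a unfolding S_def by metis
        then show False using \<open>x \<notin> S\<close> by simp
      qed
      moreover have "x = h + k * a" using k \<open>h \<le> x\<close> by linarith
      ultimately show "x \<in> {h + k * a | k. k < n}" by blast
    qed
  qed
  then show ?thesis unfolding h_def I_def S_def .
qed

end
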